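(* Let $\varphi:\mathbb{D}\to\mathbb{D}$ be a bijective holomorphic map with $\varphi(0)=0$, and let $m\in\mathrm{Hol}(\mathbb{D})$. If the weighted composition operator $W_{m,\varphi}$, $W_{m,\varphi}f=m\,(f\circ\varphi)$, is similar to a linear isometry of $\mathrm{Hol}(\mathbb{D})$, then $|m(0)|=1$.
   Context: $\mathbb{D}$ is the open unit disc and $\mathrm{Hol}(\mathbb{D})$ the Fréchet space of holomorphic functions on $\mathbb{D}$ with seminorms $\|f\|_{\infty,1-1/p}=\sup_{|z|\le 1-1/p}|f(z)|$, $p\in\mathbb{N}$, and metric $d(f,g)=\sum_{p\ge1}2^{-p}\min(1,\|f-g\|_{\infty,1-1/p})$. A linear isometry of $\mathrm{Hol}(\mathbb{D})$ is a linear operator that is an isometry for $d$. Two operators $T,V$ in the space $\mathcal{L}(\mathrm{Hol}(\mathbb{D}))$ of continuous linear operators are similar if there is an invertible $U\in\mathcal{L}(\mathrm{Hol}(\mathbb{D}))$ with $U^{-1}TU=V$. *)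

theory Defs
  imports "HOL-Analysis.Analysis"
begin

text \<open>Hol(D): holomorphic functions on the unit disc, represented canonically
  as functions that vanish outside the disc.\<close>
definition HolD :: "(complex \<Rightarrow> complex) set" where
  "HolD = {f. f holomorphic_on ball 0 1 \<and> (\<forall>z. z \<notin> ball 0 1 \<longrightarrow> f z = 0)}"

definition supr :: "real \<Rightarrow> (complex \<Rightarrow> complex) \<Rightarrow> real" where
  "supr r f = (SUP z\<in>cball 0 r. norm (f z))"

definition dHol :: "(complex \<Rightarrow> complex) \<Rightarrow> (complex \<Rightarrow> complex) \<Rightarrow> real" where
  "dHol f g = (\<Sum>p. (1/2) ^ (Suc p) * min 1 (supr (1 - 1 / real (Suc p)) (\<lambda>z. f z - g z)))"

definition linear_opH :: "((complex \<Rightarrow> complex) \<Rightarrow> (complex \<Rightarrow> complex)) \<Rightarrow> bool" where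
  "linear_opH T \<longleftrightarrow> (\<forall>f\<in>HolD. T f \<in> HolD) \<and>
     (\<forall>f\<in>HolD. \<forall>g\<in>HolD. T (\<lambda>z. f z + g z) = (\<lambda>z. T f z + T g z)) \<and>
     (\<forall>c. \<forall>f\<in>HolD. T (\<lambda>z. c * f z) = (\<lambda>z. c * T f z))"

definition cont_linear_opH :: "((complex \<Rightarrow> complex) \<Rightarrow> (complex \<Rightarrow> complex)) \<Rightarrow> bool" where
  "cont_linear_opH T \<longleftrightarrow> linear_opH T \<and>
     (\<forall>f\<in>HolD. \<forall>e>0. \<exists>\<delta>>0. \<forall>g\<in>HolD. dHol f g < \<delta> \<longrightarrow> dHol (T f) (T g) < e)"

definition linear_isometryH :: "((complex \<Rightarrow> complex) \<Rightarrow> (complex \<Rightarrow> complex)) \<Rightarrow> bool" where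
  "linear_isometryH T \<longleftrightarrow> linear_opH T \<and> (\<forall>f\<in>HolD. \<forall>g\<in>HolD. dHol (T f) (T g) = dHol f g)"

definition similarH :: "((complex \<Rightarrow> complex) \<Rightarrow> (complex \<Rightarrow> complex)) \<Rightarrow>
    ((complex \<Rightarrow> complex) \<Rightarrow> (complex \<Rightarrow> complex)) \<Rightarrow> bool" where
  "similarH T V \<longleftrightarrow> cont_linear_opH T \<and> cont_linear_opH V \<and>
     (\<exists>U Uinv. cont_linear_opH U \<and> cont_linear_opH Uinv \<and>
        (\<forall>f\<in>HolD. Uinv (U f) = f) \<and> (\<forall>f\<in>HolD. U (Uinv f) = f) \<and>
        (\<forall>f\<in>HolD. Uinv (T (U f)) = V f))"

definition wcomp :: "(complex \<Rightarrow> complex) \<Rightarrow> (complex \<Rightarrow> complex) \<Rightarrow>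
    (complex \<Rightarrow> complex) \<Rightarrow> (complex \<Rightarrow> complex)" where
  "wcomp m \<phi> f = (\<lambda>z. if z \<in> ball 0 1 then m z * f (\<phi> z) else 0)"

end

theory Submission
  imports Defs "HOL-Complex_Analysis.Complex_Analysis"
begin


abbreviation "rr p \<equiv> 1 - 1 / real (Suc p)"

lemma rr_bounds: "0 \<le> rr p" "rr p < 1"
  by auto

lemma rr_mono: "p \<le> q \<Longrightarrow> rr p \<le> rr q"
  by (simp add: frac_le)

lemma HolD_hol: assumes "h \<in> HolD" shows "h holomorphic_on ball 0 1" using assms unfolding HolD_def by simp
lemma cball_sub: assumes "(r::real) < 1" shows "cball 0 r \<subseteq> ball (0::complex) 1" using assms by auto
lemma HolD_cont: assumes "h \<in> HolD" "r < 1" shows "continuous_on (cball 0 r) h"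
  by (rule holomorphic_on_imp_continuous_on[OF holomorphic_on_subset[OF HolD_hol[OF assms(1)] cball_sub[OF assms(2)]]])

lemma HolD_bdd: assumes "h \<in> HolD" "r < 1" shows "bdd_above ((\<lambda>z. norm (h z)) ` cball 0 r)"
proof -
  have "compact (h ` cball 0 r)" by (rule compact_continuous_image[OF HolD_cont[OF assms] compact_cball])
  then have "bounded (h ` cball 0 r)" by (rule compact_imp_bounded)
  then obtain B where "\<forall>x\<in>h ` cball 0 r. norm x \<le> B" unfolding bounded_iff by (elim exE) (rule that)
  then show ?thesis by (auto intro!: bdd_aboveI)
qed

lemma supr_ge: "h \<in> HolD \<Longrightarrow> r < 1 \<Longrightarrow> z \<in> cball 0 r \<Longrightarrow> norm (h z) \<le> supr r h"
  unfolding supr_def by (rule cSUP_upper[OF _ HolD_bdd]) auto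

lemma supr_nonneg: "h \<in> HolD \<Longrightarrow> 0 \<le> r \<Longrightarrow> r < 1 \<Longrightarrow> 0 \<le> supr r h"
proof -
  assume a: "h \<in> HolD" "0 \<le> r" "r < 1"
  have "norm (h 0) \<le> supr r h" using a by (intro supr_ge) auto
  then show ?thesis using norm_ge_zero order_trans by blast
qed

lemma supr_le: "0 \<le> r \<Longrightarrow> (\<And>z. z \<in> cball 0 r \<Longrightarrow> norm (h z) \<le> e) \<Longrightarrow> supr r h \<le> e"
  unfolding supr_def by (rule cSUP_least) auto

lemma supr_mono: "h \<in> HolD \<Longrightarrow> 0 \<le> r \<Longrightarrow> r \<le> r' \<Longrightarrow> r' < 1 \<Longrightarrow> supr r h \<le> supr r' h"
  by (rule supr_le) (auto intro!: supr_ge)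

definition tm :: "(complex \<Rightarrow> complex) \<Rightarrow> nat \<Rightarrow> real" where
  "tm h p = (1/2) ^ (Suc p) * min 1 (supr (rr p) h)"

lemma dHol0: "dHol h (\<lambda>z. 0) = (\<Sum>p. tm h p)"
  by (simp add: dHol_def tm_def)

lemma dHol_sym0: "dHol (\<lambda>z. 0) h = dHol h (\<lambda>z. 0)"
  by (simp add: dHol_def supr_def)

lemma tm_bounds: "h \<in> HolD \<Longrightarrow> 0 \<le> tm h p \<and> tm h p \<le> (1/2)^Suc p"
  unfolding tm_def using supr_nonneg[OF _ rr_bounds] by auto

lemma tm_summable: "h \<in> HolD \<Longrightarrow> summable (tm h)"
proof (rule summable_comparison_test'[of "\<lambda>p. (1/2::real)^Suc p" 0])
  show "summable (\<lambda>p. (1/2::real)^Suc p)" by (simp add: summable_geometric)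
  fix n assume "h \<in> HolD" then show "norm (tm h n) \<le> (1/2)^Suc n" using tm_bounds[of h n] by simp
qed

lemma dHol_lower: assumes "h \<in> HolD" shows "tm h p \<le> dHol h (\<lambda>z. 0)"
proof -
  have "sum (tm h) {p} \<le> suminf (tm h)"
    using tm_summable[OF assms] tm_bounds[OF assms] by (intro sum_le_suminf) auto
  then show ?thesis unfolding dHol0 by simp
qed

lemma dHol_nonneg: "h \<in> HolD \<Longrightarrow> 0 \<le> dHol h (\<lambda>z. 0)"
  using dHol_lower tm_bounds by (meson order_trans)

lemma dHol_at0: assumes "h \<in> HolD" shows "(1/2) * min 1 (norm (h 0)) \<le> dHol h (\<lambda>z. 0)"
proof -
  have "supr 0 h = norm (h 0)" unfolding supr_def by simp
  then show ?thesis using dHol_lower[OF assms, of 0] by (simp add: tm_def)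
qed

lemma geom_part: "(\<Sum>p<N. (1/2::real)^Suc p) = 1 - (1/2)^N"
  by (induction N) simp_all

lemma geom_tail_sums: "(\<lambda>p. (1/2::real) ^ Suc (p + N)) sums ((1/2)^N)"
proof -
  have "(\<lambda>p. (1/2::real)^p) sums 2" using geometric_sums[of "1/2::real"] by simp
  then have "(\<lambda>p. (1/2::real)^N * ((1/2) * (1/2)^p)) sums ((1/2)^N * ((1/2) * 2))"
    by (intro sums_mult sums_mult)
  moreover have "(\<lambda>p. (1/2::real)^N * ((1/2) * (1/2)^p)) = (\<lambda>p. (1/2::real) ^ Suc (p + N))"
    by (simp add: power_add mult_ac)
  ultimately show ?thesis by simp
qed

lemma geom_tail: "(\<Sum>p. (1/2::real)^Suc (p + N)) = (1/2)^N"
  using geom_tail_sums[of N] by (simp add: sums_iff)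

lemma dHol_upper:
  assumes "h \<in> HolD" "\<And>p. p < N \<Longrightarrow> supr (rr p) h \<le> e" "0 \<le> e"
  shows "dHol h (\<lambda>z. 0) \<le> e + (1/2)^N"
proof -
  have s: "summable (tm h)" by (rule tm_summable[OF assms(1)])
  have 1: "(\<Sum>p. tm h p) = (\<Sum>p. tm h (p + N)) + sum (tm h) {..<N}"
    by (rule suminf_split_initial_segment[OF s])
  have 2: "sum (tm h) {..<N} \<le> (\<Sum>p<N. (1/2)^Suc p * e)"
  proof (rule sum_mono)
    fix p assume "p \<in> {..<N}"
    then have "min 1 (supr (rr p) h) \<le> e" using assms(2) by force
    then show "tm h p \<le> (1/2)^Suc p * e" unfolding tm_def by (intro mult_left_mono) auto
  qed
  have 3: "(\<Sum>p<N. (1/2::real)^Suc p * e) \<le> e"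
  proof -
    have "(\<Sum>p<N. (1/2::real)^Suc p) \<le> 1" unfolding geom_part by simp
    then have "(\<Sum>p<N. (1/2::real)^Suc p) * e \<le> 1 * e" using assms(3) by (rule mult_right_mono)
    then show ?thesis by (simp add: sum_distrib_right)
  qed
  have 4: "(\<Sum>p. tm h (p + N)) \<le> (\<Sum>p. (1/2::real)^Suc (p + N))"
  proof (rule suminf_le)
    show "summable (\<lambda>p. tm h (p + N))" using s by (rule summable_ignore_initial_segment)
    show "summable (\<lambda>p. (1/2::real)^Suc (p + N))" by (rule sums_summable[OF geom_tail_sums])
    show "\<And>p. tm h (p + N) \<le> (1/2::real)^Suc (p + N)" using tm_bounds[OF assms(1)] by blast
  qed
  show ?thesis unfolding dHol0 using 1 2 3 4 geom_tail[of N] by linarith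
qed



abbreviation "Z \<equiv> (\<lambda>z::complex. 0::complex)"
definition cf :: "complex \<Rightarrow> complex \<Rightarrow> complex" where
  "cf a = (\<lambda>z. if z \<in> ball 0 1 then a else 0)"

lemma Z_HolD: "Z \<in> HolD" unfolding HolD_def by simp

lemma cf_HolD: "cf a \<in> HolD"
proof -
  have "cf a holomorphic_on ball 0 1"
  proof (rule holomorphic_transform[of "\<lambda>z. a"])
    show "(\<lambda>z. a) holomorphic_on ball 0 1" by simp
    show "\<And>x. x \<in> ball 0 1 \<Longrightarrow> a = cf a x" by (simp add: cf_def)
  qed
  then show ?thesis unfolding HolD_def cf_def by simp
qed

lemma cf_0: "cf a 0 = a" by (simp add: cf_def)

lemma cf_scale: "cf a = (\<lambda>z. a * cf 1 z)" by (simp add: cf_def fun_eq_iff)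

lemma dHol_cf: assumes "0 \<le> a" shows "dHol (cf (of_real a)) Z \<le> a + (1/2)^N"
proof (rule dHol_upper[OF cf_HolD _ assms])
  fix p :: nat
  show "supr (rr p) (cf (of_real a)) \<le> a"
    by (rule supr_le) (auto simp: cf_def assms rr_bounds)
qed

lemma dHol_cf_small: assumes "0 < d" shows "\<exists>a>0. dHol (cf (of_real a)) Z < d"
proof -
  obtain N where N: "(1/2::real)^N < d/2" using real_arch_pow_inv[of "d/2" "1/2::real"] assms by auto
  have "dHol (cf (of_real (d/4))) Z \<le> d/4 + (1/2)^N" using assms by (intro dHol_cf) simp
  then have "dHol (cf (of_real (d/4))) Z < d" using N assms by linarith
  then show ?thesis using assms by (intro exI[of _ "d/4"]) simp
qed

lemma lin_Z: assumes "linear_opH T" shows "T Z = Z"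
proof -
  have "\<forall>c. \<forall>f\<in>HolD. T (\<lambda>z. c * f z) = (\<lambda>z. c * T f z)" using assms unfolding linear_opH_def by blast
  then have "\<forall>f\<in>HolD. T (\<lambda>z. 0 * f z) = (\<lambda>z. 0 * T f z)" by (rule spec)
  from bspec[OF this Z_HolD] show ?thesis by simp
qed

lemma lin_HolD: "linear_opH T \<Longrightarrow> f \<in> HolD \<Longrightarrow> T f \<in> HolD"
  unfolding linear_opH_def by blast

lemma lin_scale: "linear_opH T \<Longrightarrow> f \<in> HolD \<Longrightarrow> T (\<lambda>z. c * f z) = (\<lambda>z. c * T f z)"
  unfolding linear_opH_def by blast

lemma cont_lin: "cont_linear_opH T \<Longrightarrow> linear_opH T"
  unfolding cont_linear_opH_def by blast

lemma cont_at0: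
  assumes "cont_linear_opH T" "0 < e"
  shows "\<exists>d>0. \<forall>g\<in>HolD. dHol g Z < d \<longrightarrow> dHol (T g) Z < e"
proof -
  obtain d where d: "d > 0" "\<forall>g\<in>HolD. dHol Z g < d \<longrightarrow> dHol (T Z) (T g) < e"
    using assms Z_HolD unfolding cont_linear_opH_def by blast
  have "T Z = Z" by (rule lin_Z[OF cont_lin[OF assms(1)]])
  then show ?thesis using d by (intro exI[of _ d]) (simp add: dHol_sym0)
qed

lemma iter_HolD: assumes "linear_opH T" "f \<in> HolD" shows "(T ^^ n) f \<in> HolD"
proof (induction n)
  case 0 then show ?case using assms(2) by simp
next
  case (Suc n)
  have "T ((T ^^ n) f) \<in> HolD" by (rule lin_HolD[OF assms(1) Suc])
  then show ?case by simp
qed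

lemma iter_scale: "linear_opH T \<Longrightarrow> f \<in> HolD \<Longrightarrow> (T ^^ n) (\<lambda>z. c * f z) = (\<lambda>z. c * (T ^^ n) f z)"
proof (induction n)
  case (Suc n)
  then have "(T ^^ Suc n) (\<lambda>z. c * f z) = T (\<lambda>z. c * (T ^^ n) f z)" by simp
  also have "\<dots> = (\<lambda>z. c * T ((T ^^ n) f) z)" using Suc by (intro lin_scale iter_HolD) auto
  finally show ?case by simp
qed simp

lemma wcomp_0: "\<phi> 0 = 0 \<Longrightarrow> (wcomp m \<phi> ^^ n) g 0 = m 0 ^ n * g 0"
  by (induction n) (simp_all add: wcomp_def)

lemma compact_in_rr: fixes K :: "complex set" assumes "compact K" "K \<subseteq> ball 0 1" shows "\<exists>p. K \<subseteq> cball 0 (rr p)"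
proof (cases "K = {}")
  case True then show ?thesis by simp
next
  case False
  have "compact (norm ` K)" using assms(1) by (intro compact_continuous_image continuous_intros)
  then obtain x where x: "x \<in> K" "\<And>y. y \<in> K \<Longrightarrow> norm y \<le> norm x"
    using compact_attains_sup[of "norm ` K"] False by auto
  have "norm x < 1" using x(1) assms(2) by auto
  then obtain p where p: "inverse (real (Suc p)) < 1 - norm x" using reals_Archimedean[of "1 - norm x"] by auto
  have "K \<subseteq> cball 0 (rr p)"
  proof
    fix y assume "y \<in> K"
    then have "norm y \<le> norm x" by (rule x(2))
    then show "y \<in> cball 0 (rr p)" using p by (simp add: divide_inverse)
  qed
  then show ?thesis by blast
qed



theorem lemma3p5:
  fixes \<phi> m :: "complex \<Rightarrow> complex"
  assumes "\<phi> holomorphic_on ball 0 1"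
    and "bij_betw \<phi> (ball 0 1) (ball 0 1)"
    and "\<phi> 0 = 0"
    and "m \<in> HolD"
    and "\<exists>V. linear_isometryH V \<and> similarH (wcomp m \<phi>) V"
  shows "norm (m 0) = 1"
proof -
  define W where "W = wcomp m \<phi>"
  obtain V where V: "linear_isometryH V" "similarH W V" using assms(5) unfolding W_def by blast
  obtain U Ui where U: "cont_linear_opH U" "cont_linear_opH Ui"
      "\<And>f. f \<in> HolD \<Longrightarrow> Ui (U f) = f" "\<And>f. f \<in> HolD \<Longrightarrow> U (Ui f) = f"
      "\<And>f. f \<in> HolD \<Longrightarrow> Ui (W (U f)) = V f"
    using V(2) unfolding similarH_def by blast
  have cW: "cont_linear_opH W" using V(2) unfolding similarH_def by blast
  have lW: "linear_opH W" by (rule cont_lin[OF cW])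
  have lU: "linear_opH U" by (rule cont_lin[OF U(1)])
  have lUi: "linear_opH Ui" by (rule cont_lin[OF U(2)])
  have lV: "linear_opH V" using V(1) unfolding linear_isometryH_def by blast
  have isoV: "\<And>f g. f \<in> HolD \<Longrightarrow> g \<in> HolD \<Longrightarrow> dHol (V f) (V g) = dHol f g"
    using V(1) unfolding linear_isometryH_def by blast
  have comm: "W (U f) = U (V f)" if "f \<in> HolD" for f
  proof -
    have "W (U f) \<in> HolD" by (intro lin_HolD[OF lW] lin_HolD[OF lU] that)
    then have "U (Ui (W (U f))) = W (U f)" by (rule U(4))
    then show ?thesis using U(5)[OF that] by simp
  qed
  have commn: "(W ^^ n) (U f) = U ((V ^^ n) f)" if "f \<in> HolD" for f n
  proof (induction n)
    case (Suc n)
    have "(W ^^ Suc n) (U f) = W (U ((V ^^ n) f))" using Suc by simp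
    also have "\<dots> = U (V ((V ^^ n) f))" by (rule comm[OF iter_HolD[OF lV that]])
    finally show ?case by simp
  qed simp
  have isoVn: "dHol ((V ^^ n) f) Z = dHol f Z" if "f \<in> HolD" for f n
  proof (induction n)
    case (Suc n)
    have "dHol (V ((V ^^ n) f)) (V Z) = dHol ((V ^^ n) f) Z"
      by (rule isoV[OF iter_HolD[OF lV that] Z_HolD])
    then show ?case using Suc lin_Z[OF lV] by simp
  qed simp
  have W0: "\<And>n g. (W ^^ n) g 0 = m 0 ^ n * g 0" unfolding W_def by (rule wcomp_0[where \<phi>=\<phi>, OF assms(3)])

  have le1: "norm (m 0) \<le> 1"
  proof (rule ccontr)
    assume "\<not> norm (m 0) \<le> 1"
    then have gt: "norm (m 0) > 1" by simp
    obtain d1 where d1: "d1 > 0" "\<forall>g\<in>HolD. dHol g Z < d1 \<longrightarrow> dHol (U g) Z < 1/4"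
      using cont_at0[OF U(1), of "1/4"] by auto
    obtain d2 where d2: "d2 > 0" "\<forall>g\<in>HolD. dHol g Z < d2 \<longrightarrow> dHol (Ui g) Z < d1"
      using cont_at0[OF U(2) d1(1)] by auto
    obtain a where a: "a > 0" "dHol (cf (of_real a)) Z < d2" using dHol_cf_small[OF d2(1)] by auto
    define f where "f = Ui (cf (of_real a))"
    have fH: "f \<in> HolD" unfolding f_def by (rule lin_HolD[OF lUi cf_HolD])
    have Uf: "U f = cf (of_real a)" unfolding f_def by (rule U(4)[OF cf_HolD])
    have fs: "dHol f Z < d1" unfolding f_def using d2(2) a(2) cf_HolD by blast
    have bound: "norm (m 0) ^ n * a < 1/2" for n
    proof -
      have "dHol ((V ^^ n) f) Z < d1" using fs isoVn[OF fH] by simp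
      then have "dHol (U ((V ^^ n) f)) Z < 1/4" using d1(2) iter_HolD[OF lV fH] by blast
      moreover have "U ((V ^^ n) f) \<in> HolD" by (rule lin_HolD[OF lU iter_HolD[OF lV fH]])
      ultimately have "(1/2) * min 1 (norm (U ((V ^^ n) f) 0)) < 1/4"
        using dHol_at0 by (meson le_less_trans)
      moreover have "U ((V ^^ n) f) 0 = m 0 ^ n * of_real a"
        using commn[OF fH, of n] W0[of n] Uf cf_0 by metis
      ultimately have "min 1 (norm (m 0) ^ n * a) < 1/2"
        using a(1) by (simp add: norm_mult norm_power)
      then show ?thesis by linarith
    qed
    obtain n where "1 / a < norm (m 0) ^ n" using real_arch_pow[OF gt] by blast
    then have "1 < norm (m 0) ^ n * a" using a(1) by (simp add: field_simps)
    then show False using bound[of n] by linarith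
  qed

  have ge1: "norm (m 0) \<ge> 1"
  proof (rule ccontr)
    assume "\<not> norm (m 0) \<ge> 1"
    then have lt: "norm (m 0) < 1" by simp
    define h where "h n = (W ^^ n) (cf 1)" for n
    have hH: "h n \<in> HolD" for n unfolding h_def by (rule iter_HolD[OF lW cf_HolD])
    have bnd: "\<exists>B. \<forall>n. \<forall>z\<in>cball 0 (rr p). norm (h n z) \<le> B" for p
    proof -
      have e0: "(0::real) < (1/2)^Suc p" by simp
      obtain d1 where d1: "d1 > 0" "\<forall>g\<in>HolD. dHol g Z < d1 \<longrightarrow> dHol (U g) Z < (1/2)^Suc p"
        using cont_at0[OF U(1) e0] by auto
      obtain d2 where d2: "d2 > 0" "\<forall>g\<in>HolD. dHol g Z < d2 \<longrightarrow> dHol (Ui g) Z < d1"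
        using cont_at0[OF U(2) d1(1)] by auto
      obtain a where a: "a > 0" "dHol (cf (of_real a)) Z < d2" using dHol_cf_small[OF d2(1)] by auto
      define f where "f = Ui (cf (of_real a))"
      have fH: "f \<in> HolD" unfolding f_def by (rule lin_HolD[OF lUi cf_HolD])
      have Uf: "U f = cf (of_real a)" unfolding f_def by (rule U(4)[OF cf_HolD])
      have fs: "dHol f Z < d1" unfolding f_def using d2(2) a(2) cf_HolD by blast
      have "\<forall>n. \<forall>z\<in>cball 0 (rr p). norm (h n z) \<le> 1 / a"
      proof (intro allI ballI)
        fix n and z :: complex assume z: "z \<in> cball 0 (rr p)"
        have "dHol ((V ^^ n) f) Z < d1" using fs isoVn[OF fH] by simp
        then have lt1: "dHol (U ((V ^^ n) f)) Z < (1/2)^Suc p" using d1(2) iter_HolD[OF lV fH] by blast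
        have kH: "U ((V ^^ n) f) \<in> HolD" by (rule lin_HolD[OF lU iter_HolD[OF lV fH]])
        have keq: "U ((V ^^ n) f) = (\<lambda>z. of_real a * h n z)"
        proof -
          have "U ((V ^^ n) f) = (W ^^ n) (cf (of_real a))" using commn[OF fH, of n] Uf by simp
          also have "\<dots> = (W ^^ n) (\<lambda>z. of_real a * cf 1 z)" by (subst cf_scale) (rule refl)
          also have "\<dots> = (\<lambda>z. of_real a * (W ^^ n) (cf 1) z)" by (rule iter_scale[OF lW cf_HolD])
          finally show ?thesis unfolding h_def .
        qed
        have "tm (U ((V ^^ n) f)) p < (1/2)^Suc p" using dHol_lower[OF kH, of p] lt1 by linarith
        then have "min 1 (supr (rr p) (U ((V ^^ n) f))) < 1" unfolding tm_def by simp
        then have "supr (rr p) (U ((V ^^ n) f)) < 1" by linarith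
        moreover have "norm (U ((V ^^ n) f) z) \<le> supr (rr p) (U ((V ^^ n) f))"
          by (rule supr_ge[OF kH rr_bounds(2) z])
        ultimately have "norm (of_real a * h n z) < 1" using keq by simp
        then have "a * norm (h n z) < 1" using a(1) by (simp add: norm_mult)
        then show "norm (h n z) \<le> 1 / a" using a(1) by (simp add: field_simps)
      qed
      then show ?thesis by blast
    qed
    obtain gl \<sigma> where gl: "gl holomorphic_on ball 0 1" "strict_mono \<sigma>"
        "\<And>x. x \<in> ball 0 1 \<Longrightarrow> ((\<lambda>n. h (\<sigma> n) x) \<longlongrightarrow> gl x) sequentially"
        "\<And>K. compact K \<Longrightarrow> K \<subseteq> ball 0 1 \<Longrightarrow> uniform_limit K (h \<circ> \<sigma>) gl sequentially"
    proof (rule Montel[of "ball 0 1" "range h" h])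
      show "open (ball (0::complex) 1)" by simp
      show "\<And>k. k \<in> range h \<Longrightarrow> k holomorphic_on ball 0 1" using hH HolD_hol by blast
      show "range h \<subseteq> range h" by simp
      fix K :: "complex set" assume K: "compact K" "K \<subseteq> ball 0 1"
      obtain p where p: "K \<subseteq> cball 0 (rr p)" using compact_in_rr[OF K] by blast
      obtain B where B: "\<forall>n. \<forall>z\<in>cball 0 (rr p). norm (h n z) \<le> B" using bnd by blast
      show "\<exists>B. \<forall>k\<in>range h. \<forall>z\<in>K. norm (k z) \<le> B" using B p by blast
    qed blast
    define \<rho> where "\<rho> = (1 + norm (m 0)) / 2"
    have \<rho>: "0 \<le> \<rho>" "\<rho> < 1" unfolding \<rho>_def using lt by auto
    have mc: "continuous_on (ball 0 1) m" using HolD_hol[OF assms(4)] by (rule holomorphic_on_imp_continuous_on)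
    have e0: "(1 - norm (m 0)) / 2 > 0" using lt by simp
    obtain d where d: "d > 0" "\<forall>x'\<in>ball 0 1. dist x' 0 < d \<longrightarrow> dist (m x') (m 0) < (1 - norm (m 0)) / 2"
      using mc e0 unfolding continuous_on_iff by (meson centre_in_ball zero_less_one)
    define r0 where "r0 = min (d/2) (1/2)"
    have r0: "0 < r0" "r0 < 1" "r0 < d" unfolding r0_def using d(1) by auto
    have mbound: "norm (m z) \<le> \<rho>" if "z \<in> cball 0 r0" for z
    proof -
      have "z \<in> ball 0 1" "dist z 0 < d" using that r0 by auto
      then have "dist (m z) (m 0) < (1 - norm (m 0)) / 2" using d(2) by blast
      then have "norm (m z) - norm (m 0) < (1 - norm (m 0)) / 2" by (metis dist_norm norm_triangle_ineq2 le_less_trans)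
      then show ?thesis unfolding \<rho>_def by simp
    qed
    have phiball: "\<phi> z \<in> ball 0 1" if "z \<in> ball 0 1" for z using bij_betw_apply[OF assms(2) that] .
    have schw: "norm (\<phi> z) \<le> norm z" if "norm z < 1" for z
    proof (rule Schwarz_Lemma(1)[OF assms(1) assms(3) _ that])
      fix w :: complex assume "norm w < 1" then show "norm (\<phi> w) < 1" using phiball by simp
    qed
    have decay: "\<forall>z\<in>cball 0 r0. norm (h n z) \<le> \<rho> ^ n" for n
    proof (induction n)
      case 0
      show ?case
      proof
        fix z :: complex assume "z \<in> cball 0 r0"
        then have "z \<in> ball 0 1" using r0 by simp
        then show "norm (h 0 z) \<le> \<rho> ^ 0" unfolding h_def by (simp add: cf_def)
      qed
    next
      case (Suc n)
      show ?case
      proof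
        fix z :: complex assume z: "z \<in> cball 0 r0"
        then have zb: "z \<in> ball 0 1" using r0 by simp
        have hs: "h (Suc n) z = m z * h n (\<phi> z)" unfolding h_def W_def using zb by (simp add: wcomp_def)
        have "norm (\<phi> z) \<le> norm z" using zb by (intro schw) simp
        then have "\<phi> z \<in> cball 0 r0" using z by simp
        then have "norm (h n (\<phi> z)) \<le> \<rho> ^ n" using Suc by blast
        moreover have "norm (m z) \<le> \<rho>" by (rule mbound[OF z])
        ultimately have "norm (m z) * norm (h n (\<phi> z)) \<le> \<rho> * \<rho> ^ n"
          using \<rho>(1) by (intro mult_mono) auto
        then show "norm (h (Suc n) z) \<le> \<rho> ^ Suc n" using hs by (simp add: norm_mult)
      qed
    qed
    have gl0: "gl z = 0" if "z \<in> ball 0 r0" for z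
    proof -
      have zc: "z \<in> cball 0 r0" using that by simp
      have zb: "z \<in> ball 0 1" using that r0 by simp
      have "(\<lambda>n. \<rho> ^ n) \<longlonglongrightarrow> 0" using \<rho> by (intro LIMSEQ_power_zero) simp
      moreover have "\<forall>\<^sub>F n in sequentially. norm (h n z) \<le> \<rho> ^ n"
        using decay zc by (intro always_eventually allI) blast
      ultimately have "(\<lambda>n. h n z) \<longlonglongrightarrow> 0"
        by (intro Lim_null_comparison[of "\<lambda>n. h n z" "\<lambda>n. \<rho> ^ n"])
      then have "((\<lambda>n. h n z) \<circ> \<sigma>) \<longlonglongrightarrow> 0" using gl(2) by (rule LIMSEQ_subseq_LIMSEQ)
      then have "(\<lambda>n. h (\<sigma> n) z) \<longlonglongrightarrow> 0" by (simp add: comp_def)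
      moreover have "(\<lambda>n. h (\<sigma> n) z) \<longlonglongrightarrow> gl z" by (rule gl(3)[OF zb])
      ultimately show ?thesis using LIMSEQ_unique by metis
    qed
    have glz: "gl w = 0" if "w \<in> ball 0 1" for w
    proof (rule analytic_continuation[OF gl(1)])
      show "open (ball (0::complex) 1)" by simp
      show "connected (ball (0::complex) 1)" by simp
      show "ball 0 r0 \<subseteq> ball (0::complex) 1" using r0 by auto
      show "(0::complex) \<in> ball 0 1" by simp
      show "(0::complex) islimpt ball 0 r0" using r0 by (simp add: islimpt_ball)
      show "\<And>z. z \<in> ball 0 r0 \<Longrightarrow> gl z = 0" by (rule gl0)
      show "w \<in> ball 0 1" by (rule that)
    qed
    have small: "\<exists>n. dHol (h n) Z < \<epsilon>" if eps: "\<epsilon> > 0" for \<epsilon>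
    proof -
      obtain N where N: "(1/2::real)^N < \<epsilon>/2" using real_arch_pow_inv[of "\<epsilon>/2" "1/2::real"] eps by auto
      have ul: "uniform_limit (cball 0 (rr N)) (h \<circ> \<sigma>) gl sequentially"
        by (rule gl(4)[OF compact_cball cball_sub[OF rr_bounds(2)]])
      have "\<forall>\<^sub>F n in sequentially. \<forall>x\<in>cball 0 (rr N). dist ((h \<circ> \<sigma>) n x) (gl x) < \<epsilon>/2"
        using uniform_limitD[OF ul, of "\<epsilon>/2"] eps by linarith
      then obtain n where n: "\<forall>x\<in>cball 0 (rr N). dist ((h \<circ> \<sigma>) n x) (gl x) < \<epsilon>/2"
        unfolding eventually_sequentially by blast
      have "dHol (h (\<sigma> n)) Z \<le> \<epsilon>/2 + (1/2)^N"
      proof (rule dHol_upper[OF hH])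
        show "0 \<le> \<epsilon>/2" using eps by simp
        fix p assume "p < N"
        then have rp: "rr p \<le> rr N" by (intro rr_mono) simp
        show "supr (rr p) (h (\<sigma> n)) \<le> \<epsilon>/2"
        proof (rule supr_le[OF rr_bounds(1)])
          fix z :: complex assume "z \<in> cball 0 (rr p)"
          then have zN: "z \<in> cball 0 (rr N)" using rp by simp
          then have zb: "z \<in> ball 0 1" using cball_sub[OF rr_bounds(2)] by blast
          have "dist ((h \<circ> \<sigma>) n z) (gl z) < \<epsilon>/2" using n zN by blast
          then show "norm (h (\<sigma> n) z) \<le> \<epsilon>/2" using glz[OF zb] by (simp add: dist_norm)
        qed
      qed
      then show ?thesis using N by (intro exI[of _ "\<sigma> n"]) linarith
    qed
    define f0 where "f0 = Ui (cf 1)"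
    have f0H: "f0 \<in> HolD" unfolding f0_def by (rule lin_HolD[OF lUi cf_HolD])
    have Uf0: "U f0 = cf 1" unfolding f0_def by (rule U(4)[OF cf_HolD])
    have Uih: "Ui (h n) = (V ^^ n) f0" for n
    proof -
      have "h n = U ((V ^^ n) f0)" unfolding h_def using commn[OF f0H, of n] Uf0 by simp
      then show ?thesis using U(3)[OF iter_HolD[OF lV f0H]] by simp
    qed
    obtain d1 where d1: "d1 > 0" "\<forall>g\<in>HolD. dHol g Z < d1 \<longrightarrow> dHol (U g) Z < 1/2"
      using cont_at0[OF U(1), of "1/2"] by auto
    obtain d2 where d2: "d2 > 0" "\<forall>g\<in>HolD. dHol g Z < d2 \<longrightarrow> dHol (Ui g) Z < d1"
      using cont_at0[OF U(2) d1(1)] by auto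
    obtain n where n: "dHol (h n) Z < d2" using small[OF d2(1)] by blast
    have "dHol (Ui (h n)) Z < d1" using d2(2) n hH by blast
    then have "dHol f0 Z < d1" using Uih isoVn[OF f0H] by simp
    then have "dHol (U f0) Z < 1/2" using d1(2) f0H by blast
    moreover have "(1/2) * min 1 (norm (cf 1 0)) \<le> dHol (cf 1) Z" by (rule dHol_at0[OF cf_HolD])
    ultimately show False using Uf0 by (simp add: cf_0)
  qed
  show ?thesis using le1 ge1 by linarith
qed

end
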